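(* Let $\mathcal{X}\subset\mathbb{R}^d$ be compact, let $k$ be a positive definite kernel on $\mathcal{X}$ with $k(x,x)\le 1$ for all $x\in\mathcal{X}$, and let $f\in\mathcal{H}_k$. Assume the kernel matrices $\mathbf{K}_t$ of the query points are invertible and that all maximizers below exist. Let $x_1,\dots,x_T$ be generated by Algorithm 1: for $t=1,\dots,T$, $x_t\in\arg\max_{x\in\mathcal{X}}\, m_{t-1}(x)+\|f\|_{\mathcal{H}_k}\sigma_{t-1}(x)$, and $f(x_t)$ is observed. Fix any $\sigma>0$ and let $C_1=\frac{8}{\log(1+\sigma^{-2})}$. Then $$R_T\le \|f\|_{\mathcal{H}_k}\sqrt{T C_1\gamma_T},\qquad r_T\le \|f\|_{\mathcal{H}_k}\sqrt{\frac{C_1\gamma_T}{T}}.$$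
   Context: For query points $x_1,\dots,x_t$, $\mathbf{k}_t(x)=[k(x,x_1),\dots,k(x,x_t)]^T$, $\mathbf{K}_t=[k(x_i,x_j)]_{1\le i,j\le t}$, $\mathbf{f}_t=[f(x_1),\dots,f(x_t)]^T$, and (noise-free) $m_t(x)=\mathbf{k}_t(x)^T\mathbf{K}_t^{-1}\mathbf{f}_t$, $\sigma_t^2(x)=k(x,x)-\mathbf{k}_t(x)^T\mathbf{K}_t^{-1}\mathbf{k}_t(x)$, with $m_0\equiv 0$, $\sigma_0^2(x)=k(x,x)$. Let $x^*\in\arg\max_{x\in\mathcal{X}}f(x)$. Cumulative regret $R_T=\sum_{t=1}^T(f(x^* )-f(x_t))$; simple regret $r_T=f(x^* )-\max_{1\le t\le T}f(x_t)$. Maximum information gain: $\gamma_T=\max_{x_1,\dots,x_T\in\mathcal{X}}\frac12\log\det(\mathbf{I}_T+\sigma^{-2}\mathbf{K}_T)$. *)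

theory Defs
  imports "HOL-Analysis.Analysis" "Jordan_Normal_Form.Determinant"
          "Jordan_Normal_Form.Gauss_Jordan_Elimination"
begin

text \<open>An element of the pre-Hilbert space H_0 = span of k(p,.) is represented by a finite
  list of (coefficient, centre) pairs: g = sum c * k(p,.).\<close>

definition pre_eval :: "('a \<Rightarrow> 'a \<Rightarrow> real) \<Rightarrow> (real \<times> 'a) list \<Rightarrow> 'a \<Rightarrow> real" where
  "pre_eval k g y = (\<Sum>(c,p)\<leftarrow>g. c * k p y)"

definition pre_sqnorm :: "('a \<Rightarrow> 'a \<Rightarrow> real) \<Rightarrow> (real \<times> 'a) list \<Rightarrow> real" where
  "pre_sqnorm k g = (\<Sum>(c,p)\<leftarrow>g. \<Sum>(c',p')\<leftarrow>g. c * c' * k p p')"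

definition pre_diff :: "(real \<times> 'a) list \<Rightarrow> (real \<times> 'a) list \<Rightarrow> (real \<times> 'a) list" where
  "pre_diff g h = g @ map (\<lambda>(c,p). (- c, p)) h"

definition pd_kernel :: "('a \<Rightarrow> 'a \<Rightarrow> real) \<Rightarrow> 'a set \<Rightarrow> bool" where
  "pd_kernel k X \<longleftrightarrow> (\<forall>x\<in>X. \<forall>y\<in>X. k x y = k y x) \<and>
     (\<forall>g. set (map snd g) \<subseteq> X \<longrightarrow> pre_sqnorm k g \<ge> 0)"

definition rkhs_seq :: "('a \<Rightarrow> 'a \<Rightarrow> real) \<Rightarrow> 'a set \<Rightarrow> (nat \<Rightarrow> (real \<times> 'a) list) \<Rightarrow> ('a \<Rightarrow> real) \<Rightarrow> bool" where
  "rkhs_seq k X gs f \<longleftrightarrow> (\<forall>n. set (map snd (gs n)) \<subseteq> X) \<and>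
     (\<forall>e>0. \<exists>N. \<forall>m\<ge>N. \<forall>n\<ge>N. pre_sqnorm k (pre_diff (gs m) (gs n)) < e) \<and>
     (\<forall>y\<in>X. (\<lambda>n. pre_eval k (gs n) y) \<longlonglongrightarrow> f y)"

definition in_rkhs :: "('a \<Rightarrow> 'a \<Rightarrow> real) \<Rightarrow> 'a set \<Rightarrow> ('a \<Rightarrow> real) \<Rightarrow> bool" where
  "in_rkhs k X f \<longleftrightarrow> (\<exists>gs. rkhs_seq k X gs f)"

text \<open>RKHS norm: limit of the H_0 norms of any approximating sequence (well defined for pd k).\<close>
definition rkhs_norm :: "('a \<Rightarrow> 'a \<Rightarrow> real) \<Rightarrow> 'a set \<Rightarrow> ('a \<Rightarrow> real) \<Rightarrow> real" where
  "rkhs_norm k X f = (THE r. \<exists>gs. rkhs_seq k X gs f \<and>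
      (\<lambda>n. sqrt (pre_sqnorm k (gs n))) \<longlonglongrightarrow> r)"

text \<open>Kernel matrix K_t of query points x 1, ..., x t (0-based matrix indices).\<close>
definition Kmat :: "('a \<Rightarrow> 'a \<Rightarrow> real) \<Rightarrow> (nat \<Rightarrow> 'a) \<Rightarrow> nat \<Rightarrow> real mat" where
  "Kmat k xs t = mat t t (\<lambda>(i,j). k (xs (Suc i)) (xs (Suc j)))"

definition Kinv :: "('a \<Rightarrow> 'a \<Rightarrow> real) \<Rightarrow> (nat \<Rightarrow> 'a) \<Rightarrow> nat \<Rightarrow> real mat" where
  "Kinv k xs t = the (mat_inverse (Kmat k xs t))"

definition post_mean :: "('a \<Rightarrow> 'a \<Rightarrow> real) \<Rightarrow> ('a \<Rightarrow> real) \<Rightarrow> (nat \<Rightarrow> 'a) \<Rightarrow> nat \<Rightarrow> 'a \<Rightarrow> real" where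
  "post_mean k f xs t y = (\<Sum>i<t. \<Sum>j<t. k y (xs (Suc i)) * Kinv k xs t $$ (i,j) * f (xs (Suc j)))"

definition post_var :: "('a \<Rightarrow> 'a \<Rightarrow> real) \<Rightarrow> (nat \<Rightarrow> 'a) \<Rightarrow> nat \<Rightarrow> 'a \<Rightarrow> real" where
  "post_var k xs t y = k y y -
     (\<Sum>i<t. \<Sum>j<t. k y (xs (Suc i)) * Kinv k xs t $$ (i,j) * k y (xs (Suc j)))"

definition max_info_gain :: "('a \<Rightarrow> 'a \<Rightarrow> real) \<Rightarrow> 'a set \<Rightarrow> real \<Rightarrow> nat \<Rightarrow> real" where
  "max_info_gain k X \<sigma> T = (SUP xs \<in> {xs. \<forall>i\<in>{1..T}. xs i \<in> X}.
      1/2 * ln (det (1\<^sub>m T + (1 / \<sigma>\<^sup>2) \<cdot>\<^sub>m Kmat k xs T)))"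

definition cumulative_regret :: "('a \<Rightarrow> real) \<Rightarrow> 'a \<Rightarrow> (nat \<Rightarrow> 'a) \<Rightarrow> nat \<Rightarrow> real" where
  "cumulative_regret f xstar xs T = (\<Sum>t=1..T. f xstar - f (xs t))"

definition simple_regret :: "('a \<Rightarrow> real) \<Rightarrow> 'a \<Rightarrow> (nat \<Rightarrow> 'a) \<Rightarrow> nat \<Rightarrow> real" where
  "simple_regret f xstar xs T = f xstar - Max ((\<lambda>t. f (xs t)) ` {1..T})"

end

theory Submission
  imports Defs
begin


definition ip :: "('a \<Rightarrow> 'a \<Rightarrow> real) \<Rightarrow> (real \<times> 'a) list \<Rightarrow> (real \<times> 'a) list \<Rightarrow> real" where
  "ip k g h = (\<Sum>(c,p)\<leftarrow>g. \<Sum>(c',p')\<leftarrow>h. c * c' * k p p')"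

definition negl :: "(real \<times> 'a) list \<Rightarrow> (real \<times> 'a) list" where
  "negl h = map (\<lambda>(c,p). (- c, p)) h"

definition scl :: "real \<Rightarrow> (real \<times> 'a) list \<Rightarrow> (real \<times> 'a) list" where
  "scl t h = map (\<lambda>(c,p). (t * c, p)) h"

lemma sum_list_swap:
  "(\<Sum>x\<leftarrow>xs. \<Sum>y\<leftarrow>ys. f x y) = (\<Sum>y\<leftarrow>ys. \<Sum>x\<leftarrow>xs. (f x y :: real))"
  by (induction xs) (simp_all add: sum_list_addf)

lemma psq_ip: "pre_sqnorm k g = ip k g g"
  unfolding pre_sqnorm_def ip_def by simp

lemma ip_eval: "ip k g h = (\<Sum>(c',p')\<leftarrow>h. c' * pre_eval k g p')"
proof (induction g)
  case Nil
  then show ?case by (simp add: ip_def pre_eval_def)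
next
  case (Cons a g)
  obtain c p where a: "a = (c,p)" by force
  have "ip k (a # g) h = (\<Sum>(c',p')\<leftarrow>h. c * c' * k p p') + ip k g h"
    by (simp add: ip_def a)
  also have "\<dots> = (\<Sum>(c',p')\<leftarrow>h. c' * pre_eval k (a # g) p')"
    unfolding Cons a by (induction h) (auto simp: pre_eval_def algebra_simps)
  finally show ?case .
qed

lemma pre_eval_append[simp]: "pre_eval k (g @ h) y = pre_eval k g y + pre_eval k h y"
  by (simp add: pre_eval_def)
lemma pre_eval_negl[simp]: "pre_eval k (negl h) y = - pre_eval k h y"
  by (induction h) (auto simp: pre_eval_def negl_def)
lemma pre_eval_scl[simp]: "pre_eval k (scl t h) y = t * pre_eval k h y"
  by (induction h) (auto simp: pre_eval_def scl_def algebra_simps)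
lemma pre_eval_diff[simp]: "pre_eval k (pre_diff g h) y = pre_eval k g y - pre_eval k h y"
  by (simp add: pre_diff_def negl_def[symmetric])
lemma pre_diff_negl: "pre_diff g h = g @ negl h"
  by (simp add: pre_diff_def negl_def)

lemma snd_negl[simp]: "map snd (negl h) = map snd h"
  by (induction h) (auto simp: negl_def)
lemma snd_scl[simp]: "map snd (scl t h) = map snd h"
  by (induction h) (auto simp: scl_def)

lemma ip_append2: "ip k g (h @ h') = ip k g h + ip k g h'"
  by (simp add: ip_eval)
lemma ip_append1: "ip k (g @ g') h = ip k g h + ip k g' h"
  by (simp add: ip_def)
lemma ip_scl2: "ip k g (scl t h) = t * ip k g h"
  unfolding ip_eval scl_def
  by (induction h) (auto simp: algebra_simps)

lemma ip_sym:
  assumes sym: "\<forall>x\<in>X. \<forall>y\<in>X. k x y = k y x"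
    and g: "set (map snd g) \<subseteq> X" and h: "set (map snd h) \<subseteq> X"
  shows "ip k g h = ip k h g"
proof -
  have "ip k h g = (\<Sum>(c,p)\<leftarrow>g. c * pre_eval k h p)" by (simp add: ip_eval)
  also have "\<dots> = (\<Sum>(c,p)\<leftarrow>g. c * (\<Sum>(c',p')\<leftarrow>h. c' * k p p'))"
  proof (rule arg_cong[where f=sum_list], rule map_cong[OF refl])
    fix q assume q: "q \<in> set g"
    obtain c p where qq: "q = (c,p)" by force
    have pX: "p \<in> X" using q g qq by force
    have "pre_eval k h p = (\<Sum>(c',p')\<leftarrow>h. c' * k p p')"
      unfolding pre_eval_def
    proof (rule arg_cong[where f=sum_list], rule map_cong[OF refl])
      fix r assume r: "r \<in> set h"
      obtain c' p' where rr: "r = (c',p')" by force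
      have "p' \<in> X" using r h rr by force
      then show "(case r of (c, p') \<Rightarrow> c * k p' p) = (case r of (c', p') \<Rightarrow> c' * k p p')"
        using sym pX rr by auto
    qed
    then show "(case q of (c, p) \<Rightarrow> c * pre_eval k h p) = (case q of (c, p) \<Rightarrow> c * (\<Sum>(c', p')\<leftarrow>h. c' * k p p'))"
      using qq by simp
  qed
  also have "\<dots> = ip k g h"
    unfolding ip_def
    apply (rule arg_cong[where f=sum_list], rule map_cong, simp)
    apply (auto simp: sum_list_const_mult[symmetric] algebra_simps)
    apply (rule arg_cong[where f=sum_list], rule map_cong[OF refl])
    by (auto simp: algebra_simps)
  finally show ?thesis by simp
qed

lemma ip_eval1:
  assumes sym: "\<forall>x\<in>X. \<forall>y\<in>X. k x y = k y x"
    and g: "set (map snd g) \<subseteq> X" and h: "set (map snd h) \<subseteq> X"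
  shows "ip k g h = (\<Sum>(c,p)\<leftarrow>g. c * pre_eval k h p)"
  using ip_sym[OF sym g h] ip_eval[of k h g] by simp

lemma psd: assumes "pd_kernel k X" "set (map snd g) \<subseteq> X"
  shows "0 \<le> ip k g g"
  using assms by (simp add: pd_kernel_def psq_ip)

lemma quad_disc:
  fixes a b c :: real
  assumes "\<And>t. 0 \<le> c + 2 * t * b + t\<^sup>2 * a" and a0: "0 \<le> a"
  shows "b\<^sup>2 \<le> a * c"
proof (cases "a > 0")
  case True
  have "0 \<le> c + 2 * (-b/a) * b + (-b/a)\<^sup>2 * a" by (rule assms)
  also have "\<dots> = c - b\<^sup>2 / a" using True by (simp add: power2_eq_square field_simps)
  finally show ?thesis using True by (simp add: field_simps)
next
  case False
  then have a: "a = 0" using a0 by simp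
  show ?thesis
  proof (cases "b = 0")
    case True
    then show ?thesis using a by simp
  next
    case bn: False
    define t where "t = - (\<bar>c\<bar> + 1) / (2 * b)"
    have "0 \<le> c + 2 * t * b + t\<^sup>2 * a" by (rule assms)
    also have "2 * t * b = - (\<bar>c\<bar> + 1)" using bn by (simp add: t_def)
    finally have "0 \<le> c - (\<bar>c\<bar> + 1)" using a by simp
    then show ?thesis by linarith
  qed
qed

lemma cauchy_schwarz_ip:
  assumes pd: "pd_kernel k X"
    and g: "set (map snd g) \<subseteq> X" and h: "set (map snd h) \<subseteq> X"
  shows "(ip k g h)\<^sup>2 \<le> ip k g g * ip k h h"
proof -
  have sym: "\<forall>x\<in>X. \<forall>y\<in>X. k x y = k y x" using pd by (simp add: pd_kernel_def)
  have "0 \<le> ip k g g + 2 * t * ip k g h + t\<^sup>2 * ip k h h" for t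
  proof -
    have s: "set (map snd (g @ scl t h)) \<subseteq> X" using g h by auto
    have "0 \<le> ip k (g @ scl t h) (g @ scl t h)" by (rule psd[OF pd s])
    also have "\<dots> = ip k g g + ip k g (scl t h) + (ip k (scl t h) g + ip k (scl t h) (scl t h))"
      by (simp add: ip_append1 ip_append2)
    also have "ip k (scl t h) g = ip k g (scl t h)"
      by (rule ip_sym[OF sym]) (use g h in auto)
    also have "ip k (scl t h) (scl t h) = ip k h (scl t h) * t"
      using ip_sym[OF sym, of "scl t h" h] h by (simp add: ip_scl2)
    finally show ?thesis by (simp add: ip_scl2 power2_eq_square algebra_simps)
  qed
  from quad_disc[OF this psd[OF pd h]] show ?thesis by (simp add: mult.commute)
qed

definition nrm :: "('a \<Rightarrow> 'a \<Rightarrow> real) \<Rightarrow> (real \<times> 'a) list \<Rightarrow> real" where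
  "nrm k g = sqrt (pre_sqnorm k g)"

lemma eval_cong_ip:
  assumes h: "set (map snd h) \<subseteq> X" and e: "\<forall>y\<in>X. pre_eval k g y = pre_eval k g' y"
  shows "ip k g h = ip k g' h"
  unfolding ip_eval
proof (rule arg_cong[where f=sum_list], rule map_cong[OF refl])
  fix r assume r: "r \<in> set h"
  obtain c' p' where rr: "r = (c',p')" by force
  have "p' \<in> X" using r h rr by force
  then show "(case r of (c', p') \<Rightarrow> c' * pre_eval k g p') = (case r of (c', p') \<Rightarrow> c' * pre_eval k g' p')"
    using e rr by auto
qed

lemma psq_eval_eq:
  assumes pd: "pd_kernel k X" and g: "set (map snd g) \<subseteq> X" and g': "set (map snd g') \<subseteq> X"
    and e: "\<forall>y\<in>X. pre_eval k g y = pre_eval k g' y"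
  shows "pre_sqnorm k g = pre_sqnorm k g'"
proof -
  have sym: "\<forall>x\<in>X. \<forall>y\<in>X. k x y = k y x" using pd by (simp add: pd_kernel_def)
  have "ip k g g = ip k g' g" by (rule eval_cong_ip[OF g e])
  also have "\<dots> = ip k g g'" by (rule ip_sym[OF sym g' g])
  also have "\<dots> = ip k g' g'" by (rule eval_cong_ip[OF g' e])
  finally show ?thesis by (simp add: psq_ip)
qed

lemma ip_bound:
  assumes pd: "pd_kernel k X" and g: "set (map snd g) \<subseteq> X" and h: "set (map snd h) \<subseteq> X"
  shows "\<bar>ip k g h\<bar> \<le> nrm k g * nrm k h"
proof -
  have "\<bar>ip k g h\<bar> = sqrt ((ip k g h)\<^sup>2)" by simp
  also have "\<dots> \<le> sqrt (ip k g g * ip k h h)"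
    by (rule real_sqrt_le_mono[OF cauchy_schwarz_ip[OF pd g h]])
  also have "\<dots> = nrm k g * nrm k h" by (simp add: nrm_def psq_ip real_sqrt_mult)
  finally show ?thesis .
qed

lemma nrm_nonneg: "pd_kernel k X \<Longrightarrow> set (map snd g) \<subseteq> X \<Longrightarrow> 0 \<le> nrm k g"
  using psd[of k X g] by (simp add: nrm_def psq_ip)

lemma ip_negl2: "ip k g (negl h) = - ip k g h"
  unfolding ip_eval negl_def by (induction h) auto

lemma ip_negl1: "ip k (negl g) h = - ip k g h"
  unfolding ip_eval by (induction h) auto

lemma nrm_tri:
  assumes pd: "pd_kernel k X" and g: "set (map snd g) \<subseteq> X" and h: "set (map snd h) \<subseteq> X"
  shows "nrm k (g @ h) \<le> nrm k g + nrm k h"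
proof -
  have sym: "\<forall>x\<in>X. \<forall>y\<in>X. k x y = k y x" using pd by (simp add: pd_kernel_def)
  have e: "ip k (g @ h) (g @ h) = ip k g g + 2 * ip k g h + ip k h h"
    by (simp add: ip_append1 ip_append2 ip_sym[OF sym h g])
  have b: "ip k g h \<le> nrm k g * nrm k h" using ip_bound[OF pd g h] by simp
  have gg: "ip k g g = (nrm k g)\<^sup>2" using psd[OF pd g] by (simp add: nrm_def psq_ip)
  have hh: "ip k h h = (nrm k h)\<^sup>2" using psd[OF pd h] by (simp add: nrm_def psq_ip)
  have "ip k (g @ h) (g @ h) \<le> (nrm k g + nrm k h)\<^sup>2"
    using e b gg hh by (simp add: power2_eq_square algebra_simps)
  then have "sqrt (ip k (g @ h) (g @ h)) \<le> sqrt ((nrm k g + nrm k h)\<^sup>2)"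
    by (rule real_sqrt_le_mono)
  also have "\<dots> = nrm k g + nrm k h"
    using nrm_nonneg[OF pd g] nrm_nonneg[OF pd h] by simp
  finally show ?thesis by (simp add: nrm_def psq_ip)
qed

lemma nrm_negl: "nrm k (negl h) = nrm k h"
  by (simp add: nrm_def psq_ip ip_negl1 ip_negl2)

lemma tri_eval:
  assumes pd: "pd_kernel k X" and g: "set (map snd g) \<subseteq> X"
    and a: "set (map snd a) \<subseteq> X" and b: "set (map snd b) \<subseteq> X"
    and e: "\<forall>y\<in>X. pre_eval k g y = pre_eval k a y + pre_eval k b y"
  shows "nrm k g \<le> nrm k a + nrm k b"
proof -
  have "nrm k g = nrm k (a @ b)"
    unfolding nrm_def using psq_eval_eq[OF pd g _ , of "a @ b"] a b e by simp
  also have "\<dots> \<le> nrm k a + nrm k b" by (rule nrm_tri[OF pd a b])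
  finally show ?thesis .
qed

lemma tri_eval_diff:
  assumes pd: "pd_kernel k X" and g: "set (map snd g) \<subseteq> X"
    and a: "set (map snd a) \<subseteq> X" and b: "set (map snd b) \<subseteq> X"
    and e: "\<forall>y\<in>X. pre_eval k g y = pre_eval k a y - pre_eval k b y"
  shows "nrm k g \<le> nrm k a + nrm k b"
  using tri_eval[OF pd g a _ , of "negl b"] b e nrm_negl[of k b] by simp

lemma tendsto_sum_list_zero:
  assumes "\<forall>q\<in>set l. ((\<lambda>n. F n q) \<longlongrightarrow> (0::real)) sequentially"
  shows "((\<lambda>n. sum_list (map (F n) l)) \<longlongrightarrow> 0) sequentially"
  using assms
proof (induction l)
  case Nil then show ?case by simp
next
  case (Cons a l)
  then show ?case using tendsto_add[of "\<lambda>n. F n a" 0 sequentially "\<lambda>n. sum_list (map (F n) l)" 0]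
    by simp
qed

lemma cauchy_pointwise_zero:
  assumes pd: "pd_kernel k X" and d: "\<And>n. set (map snd (d n)) \<subseteq> X"
    and cau: "\<And>e. e > 0 \<Longrightarrow> \<exists>N. \<forall>m\<ge>N. \<forall>n\<ge>N. nrm k (pre_diff (d m) (d n)) < e"
    and pw: "\<And>y. y \<in> X \<Longrightarrow> (\<lambda>n. pre_eval k (d n) y) \<longlonglongrightarrow> 0"
  shows "(\<lambda>n. ip k (d n) (d n)) \<longlonglongrightarrow> 0"
proof -
  have dd: "set (map snd (pre_diff (d m) (d n))) \<subseteq> X" for m n
    using d[of m] d[of n] by (auto simp: pre_diff_def)
  obtain N1 where N1: "\<forall>m\<ge>N1. \<forall>n\<ge>N1. nrm k (pre_diff (d m) (d n)) < 1" using cau[of 1] by auto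
  define B where "B = nrm k (d N1) + 1"
  have Bpos: "B > 0" using nrm_nonneg[OF pd d[of N1]] by (simp add: B_def)
  have bnd: "nrm k (d n) \<le> B" if "n \<ge> N1" for n
  proof -
    have "nrm k (d n) \<le> nrm k (pre_diff (d n) (d N1)) + nrm k (d N1)"
      by (rule tri_eval[OF pd d dd d]) simp
    then show ?thesis using N1[rule_format, of n N1] that by (simp add: B_def)
  qed
  show ?thesis
    unfolding tendsto_iff
  proof (intro allI impI)
    fix r :: real assume r: "r > 0"
    define eps where "eps = r / (2 * B)"
    have eps: "eps > 0" using r Bpos by (simp add: eps_def)
    obtain N2 where N2: "\<forall>m\<ge>N2. \<forall>n\<ge>N2. nrm k (pre_diff (d m) (d n)) < eps"
      using cau[OF eps] by auto
    define M where "M = max N1 N2"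
    have "(\<lambda>n. ip k (d n) (d M)) \<longlonglongrightarrow> 0"
      unfolding ip_eval
      by (rule tendsto_sum_list_zero) (use d[of M] in \<open>force intro!: tendsto_mult_right_zero pw\<close>)
    then have ev: "eventually (\<lambda>n. \<bar>ip k (d n) (d M)\<bar> < r / 2) sequentially"
      unfolding tendsto_iff using r by (simp add: dist_real_def del: divide_const_simps)
    have ev2: "eventually (\<lambda>n. n \<ge> M) sequentially" by (rule eventually_ge_at_top)
    show "eventually (\<lambda>n. dist (ip k (d n) (d n)) 0 < r) sequentially"
      using ev ev2
    proof eventually_elim
      case (elim n)
      have split: "ip k (d n) (d n) = ip k (d n) (pre_diff (d n) (d M)) + ip k (d n) (d M)"
        by (simp add: pre_diff_negl ip_append2 ip_negl2)
      have "\<bar>ip k (d n) (pre_diff (d n) (d M))\<bar> \<le> nrm k (d n) * nrm k (pre_diff (d n) (d M))"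
        by (rule ip_bound[OF pd d dd])
      also have "\<dots> \<le> B * eps"
        apply (rule mult_mono)
        using bnd[of n] elim N2[rule_format, of n M] M_def nrm_nonneg[OF pd dd] Bpos by auto
      also have "\<dots> = r / 2" using Bpos by (simp add: eps_def)
      finally show ?case using split elim(1) by (simp add: dist_real_def)
    qed
  qed
qed

lemma rkhs_seq_cau_nrm:
  assumes pd: "pd_kernel k X" and r: "rkhs_seq k X gs f" and e: "e > 0"
  shows "\<exists>N. \<forall>m\<ge>N. \<forall>n\<ge>N. nrm k (pre_diff (gs m) (gs n)) < e"
proof -
  from r e obtain N where N: "\<forall>m\<ge>N. \<forall>n\<ge>N. pre_sqnorm k (pre_diff (gs m) (gs n)) < e\<^sup>2"
    unfolding rkhs_seq_def by (meson zero_less_power)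
  have "nrm k (pre_diff (gs m) (gs n)) < e" if "m \<ge> N" "n \<ge> N" for m n
  proof -
    have "sqrt (pre_sqnorm k (pre_diff (gs m) (gs n))) < sqrt (e\<^sup>2)"
      using N that by (simp only: real_sqrt_less_iff)
    then show ?thesis using e by (simp add: nrm_def)
  qed
  then show ?thesis by blast
qed

lemma rkhs_seq_X: "rkhs_seq k X gs f \<Longrightarrow> set (map snd (gs n)) \<subseteq> X"
  unfolding rkhs_seq_def by blast

lemma rkhs_seq_pw: "rkhs_seq k X gs f \<Longrightarrow> y \<in> X \<Longrightarrow> (\<lambda>n. pre_eval k (gs n) y) \<longlonglongrightarrow> f y"
  unfolding rkhs_seq_def by blast

lemma rkhs_seq_convergent:
  assumes pd: "pd_kernel k X" and r: "rkhs_seq k X gs f"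
  shows "convergent (\<lambda>n. nrm k (gs n))"
proof -
  have X: "\<And>n. set (map snd (gs n)) \<subseteq> X" using rkhs_seq_X[OF r] .
  have dd: "set (map snd (pre_diff (gs m) (gs n))) \<subseteq> X" for m n
    using X[of m] X[of n] by (auto simp: pre_diff_def)
  have "Cauchy (\<lambda>n. nrm k (gs n))"
  proof (rule CauchyI)
    fix e :: real assume e: "e > 0"
    obtain N where N: "\<forall>m\<ge>N. \<forall>n\<ge>N. nrm k (pre_diff (gs m) (gs n)) < e"
      using rkhs_seq_cau_nrm[OF pd r e] by auto
    have "norm (nrm k (gs m) - nrm k (gs n)) < e" if "m \<ge> N" "n \<ge> N" for m n
    proof -
      have 1: "nrm k (gs m) \<le> nrm k (pre_diff (gs m) (gs n)) + nrm k (gs n)"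
        by (rule tri_eval[OF pd X dd X]) simp
      have 2: "nrm k (gs n) \<le> nrm k (gs m) + nrm k (pre_diff (gs m) (gs n))"
        by (rule tri_eval_diff[OF pd X X dd]) simp
      show ?thesis using 1 2 N that by force
    qed
    then show "\<exists>M. \<forall>m\<ge>M. \<forall>n\<ge>M. norm (nrm k (gs m) - nrm k (gs n)) < e" by blast
  qed
  then show ?thesis by (simp add: Cauchy_convergent_iff)
qed

lemma rkhs_seq_same:
  assumes pd: "pd_kernel k X" and r: "rkhs_seq k X gs f" and r': "rkhs_seq k X hs f"
  shows "(\<lambda>n. nrm k (gs n) - nrm k (hs n)) \<longlonglongrightarrow> 0"
proof -
  have X: "\<And>n. set (map snd (gs n)) \<subseteq> X" using rkhs_seq_X[OF r] .
  have X': "\<And>n. set (map snd (hs n)) \<subseteq> X" using rkhs_seq_X[OF r'] .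
  define d where "d n = pre_diff (gs n) (hs n)" for n
  have dX: "set (map snd (d n)) \<subseteq> X" for n using X[of n] X'[of n] by (auto simp: pre_diff_def d_def)
  have ddX: "set (map snd (pre_diff (d m) (d n))) \<subseteq> X" for m n
    using dX[of m] dX[of n] by (auto simp: pre_diff_def)
  have gdX: "set (map snd (pre_diff (gs m) (gs n))) \<subseteq> X" for m n
    using X[of m] X[of n] by (auto simp: pre_diff_def)
  have hdX: "set (map snd (pre_diff (hs m) (hs n))) \<subseteq> X" for m n
    using X'[of m] X'[of n] by (auto simp: pre_diff_def)
  have "(\<lambda>n. ip k (d n) (d n)) \<longlonglongrightarrow> 0"
  proof (rule cauchy_pointwise_zero[OF pd dX])
    fix e :: real assume e: "e > 0"
    obtain N1 where N1: "\<forall>m\<ge>N1. \<forall>n\<ge>N1. nrm k (pre_diff (gs m) (gs n)) < e/2"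
      using rkhs_seq_cau_nrm[OF pd r, of "e/2"] e by auto
    obtain N2 where N2: "\<forall>m\<ge>N2. \<forall>n\<ge>N2. nrm k (pre_diff (hs m) (hs n)) < e/2"
      using rkhs_seq_cau_nrm[OF pd r', of "e/2"] e by auto
    have "nrm k (pre_diff (d m) (d n)) < e" if "m \<ge> max N1 N2" "n \<ge> max N1 N2" for m n
    proof -
      have "nrm k (pre_diff (d m) (d n)) \<le> nrm k (pre_diff (gs m) (gs n)) + nrm k (pre_diff (hs m) (hs n))"
        by (rule tri_eval_diff[OF pd ddX gdX hdX]) (simp add: d_def)
      then show ?thesis using N1[rule_format, of m n] N2[rule_format, of m n] that by simp
    qed
    then show "\<exists>N. \<forall>m\<ge>N. \<forall>n\<ge>N. nrm k (pre_diff (d m) (d n)) < e" by blast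
  next
    fix y assume y: "y \<in> X"
    show "(\<lambda>n. pre_eval k (d n) y) \<longlonglongrightarrow> 0"
      using tendsto_diff[OF rkhs_seq_pw[OF r y] rkhs_seq_pw[OF r' y]] by (simp add: d_def)
  qed
  then have z: "(\<lambda>n. nrm k (d n)) \<longlonglongrightarrow> 0"
    unfolding nrm_def psq_ip using tendsto_real_sqrt by fastforce
  show ?thesis
  proof (rule Lim_null_comparison[OF _ z], rule always_eventually, rule allI)
    fix n
    have 1: "nrm k (gs n) \<le> nrm k (d n) + nrm k (hs n)"
      by (rule tri_eval[OF pd X dX X']) (simp add: d_def)
    have 2: "nrm k (hs n) \<le> nrm k (gs n) + nrm k (d n)"
      by (rule tri_eval_diff[OF pd X' X dX]) (simp add: d_def)
    show "norm (nrm k (gs n) - nrm k (hs n)) \<le> nrm k (d n)" using 1 2 by simp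
  qed
qed

lemma rkhs_norm_lim:
  assumes pd: "pd_kernel k X" and r: "rkhs_seq k X gs f"
  shows "(\<lambda>n. nrm k (gs n)) \<longlonglongrightarrow> rkhs_norm k X f"
proof -
  obtain L where L: "(\<lambda>n. nrm k (gs n)) \<longlonglongrightarrow> L"
    using rkhs_seq_convergent[OF pd r] by (auto simp: convergent_def)
  have "rkhs_norm k X f = L"
    unfolding rkhs_norm_def
  proof (rule the_equality)
    show "\<exists>gs. rkhs_seq k X gs f \<and> (\<lambda>n. sqrt (pre_sqnorm k (gs n))) \<longlonglongrightarrow> L"
      using r L by (auto simp: nrm_def)
  next
    fix r' assume "\<exists>hs. rkhs_seq k X hs f \<and> (\<lambda>n. sqrt (pre_sqnorm k (hs n))) \<longlonglongrightarrow> r'"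
    then obtain hs where hs: "rkhs_seq k X hs f" "(\<lambda>n. nrm k (hs n)) \<longlonglongrightarrow> r'"
      by (auto simp: nrm_def)
    have "(\<lambda>n. nrm k (gs n) - nrm k (hs n)) \<longlonglongrightarrow> L - r'" using tendsto_diff[OF L hs(2)] .
    moreover have "(\<lambda>n. nrm k (gs n) - nrm k (hs n)) \<longlonglongrightarrow> 0" by (rule rkhs_seq_same[OF pd r hs(1)])
    ultimately have "L - r' = 0" using LIMSEQ_unique by blast
    then show "r' = L" by simp
  qed
  then show ?thesis using L by simp
qed



definition beta :: "('a \<Rightarrow> 'a \<Rightarrow> real) \<Rightarrow> (nat \<Rightarrow> 'a) \<Rightarrow> nat \<Rightarrow> 'a \<Rightarrow> nat \<Rightarrow> real" where
  "beta k xs t y j = (\<Sum>i<t. k y (xs (Suc i)) * Kinv k xs t $$ (i,j))"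

definition hl :: "('a \<Rightarrow> 'a \<Rightarrow> real) \<Rightarrow> (nat \<Rightarrow> 'a) \<Rightarrow> nat \<Rightarrow> 'a \<Rightarrow> (real \<times> 'a) list" where
  "hl k xs t y = (1, y) # map (\<lambda>j. (- beta k xs t y j, xs (Suc j))) [0..<t]"

definition kinv_ok :: "('a \<Rightarrow> 'a \<Rightarrow> real) \<Rightarrow> (nat \<Rightarrow> 'a) \<Rightarrow> nat \<Rightarrow> bool" where
  "kinv_ok k xs t \<longleftrightarrow> (\<forall>i<t. \<forall>l<t. (\<Sum>j<t. Kinv k xs t $$ (i,j) * k (xs (Suc j)) (xs (Suc l)))
      = (if i = l then 1 else 0))"

lemma sum_list_upt_map: "sum_list (map f [0..<t]) = (\<Sum>j<t. f j)"
  by (simp add: interv_sum_list_conv_sum_set_nat atLeast0LessThan)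

lemma eval_hl: "pre_eval k (hl k xs t y) p = k y p - (\<Sum>j<t. beta k xs t y j * k (xs (Suc j)) p)"
  by (simp add: hl_def pre_eval_def o_def sum_list_upt_map sum_negf)

lemma ip_hl_right: "ip k g (hl k xs t y) = pre_eval k g y - (\<Sum>j<t. beta k xs t y j * pre_eval k g (xs (Suc j)))"
  by (simp add: hl_def ip_eval o_def sum_list_upt_map sum_negf)

lemma post_mean_beta: "post_mean k F xs t y = (\<Sum>j<t. beta k xs t y j * F (xs (Suc j)))"
  unfolding post_mean_def beta_def
  by (subst sum.swap) (simp add: sum_distrib_right)

lemma post_var_beta: "post_var k xs t y = k y y - (\<Sum>j<t. beta k xs t y j * k y (xs (Suc j)))"
  unfolding post_var_def beta_def
  by (subst sum.swap) (simp add: sum_distrib_right)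

lemma beta_K:
  assumes ok: "kinv_ok k xs t" and l: "l < t"
  shows "(\<Sum>j<t. beta k xs t y j * k (xs (Suc j)) (xs (Suc l))) = k y (xs (Suc l))"
proof -
  have "(\<Sum>j<t. beta k xs t y j * k (xs (Suc j)) (xs (Suc l)))
      = (\<Sum>i<t. k y (xs (Suc i)) * (\<Sum>j<t. Kinv k xs t $$ (i,j) * k (xs (Suc j)) (xs (Suc l))))"
    unfolding beta_def sum_distrib_right sum_distrib_left mult.assoc by (rule sum.swap)
  also have "\<dots> = (\<Sum>i<t. k y (xs (Suc i)) * (if i = l then 1 else 0))"
    using ok l by (auto simp: kinv_ok_def intro!: sum.cong)
  also have "\<dots> = k y (xs (Suc l))" using l by (simp add: if_distrib cong: if_cong)
  finally show ?thesis .
qed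

lemma psq_hl:
  assumes ok: "kinv_ok k xs t" and sym: "\<And>j. j < t \<Longrightarrow> k (xs (Suc j)) y = k y (xs (Suc j))"
  shows "pre_sqnorm k (hl k xs t y) = post_var k xs t y"
proof -
  have z: "pre_eval k (hl k xs t y) (xs (Suc l)) = 0" if "l < t" for l
    using beta_K[OF ok that] by (simp add: eval_hl)
  have "pre_sqnorm k (hl k xs t y) = pre_eval k (hl k xs t y) y"
    unfolding psq_ip ip_hl_right using z by simp
  also have "\<dots> = post_var k xs t y"
    unfolding eval_hl post_var_beta using sym by simp
  finally show ?thesis .
qed

lemma hl_X: "y \<in> X \<Longrightarrow> (\<And>j. j < t \<Longrightarrow> xs (Suc j) \<in> X) \<Longrightarrow> set (map snd (hl k xs t y)) \<subseteq> X"
  by (auto simp: hl_def)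

lemma H0_bound:
  assumes pd: "pd_kernel k X" and g: "set (map snd g) \<subseteq> X" and y: "y \<in> X"
    and xsX: "\<And>j. j < t \<Longrightarrow> xs (Suc j) \<in> X" and ok: "kinv_ok k xs t"
  shows "\<bar>pre_eval k g y - post_mean k (pre_eval k g) xs t y\<bar> \<le> nrm k g * sqrt (post_var k xs t y)"
    and "0 \<le> post_var k xs t y"
proof -
  have sym: "\<forall>x\<in>X. \<forall>y\<in>X. k x y = k y x" using pd by (simp add: pd_kernel_def)
  have hX: "set (map snd (hl k xs t y)) \<subseteq> X" by (rule hl_X) (use y xsX in auto)
  have pv: "pre_sqnorm k (hl k xs t y) = post_var k xs t y"
    by (rule psq_hl[OF ok]) (use sym y xsX in blast)
  have "\<bar>ip k g (hl k xs t y)\<bar> \<le> nrm k g * nrm k (hl k xs t y)" by (rule ip_bound[OF pd g hX])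
  then show "\<bar>pre_eval k g y - post_mean k (pre_eval k g) xs t y\<bar> \<le> nrm k g * sqrt (post_var k xs t y)"
    by (simp add: ip_hl_right post_mean_beta nrm_def pv)
  show "0 \<le> post_var k xs t y" using psd[OF pd hX] pv by (simp add: psq_ip)
qed

lemma f_bound:
  assumes pd: "pd_kernel k X" and f: "in_rkhs k X f" and y: "y \<in> X"
    and xsX: "\<And>j. j < t \<Longrightarrow> xs (Suc j) \<in> X" and ok: "kinv_ok k xs t"
  shows "\<bar>f y - post_mean k f xs t y\<bar> \<le> rkhs_norm k X f * sqrt (post_var k xs t y)"
proof -
  obtain gs where r: "rkhs_seq k X gs f" using f by (auto simp: in_rkhs_def)
  have l1: "(\<lambda>n. \<bar>pre_eval k (gs n) y - post_mean k (pre_eval k (gs n)) xs t y\<bar>)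
      \<longlonglongrightarrow> \<bar>f y - post_mean k f xs t y\<bar>"
    unfolding post_mean_def
    by (intro tendsto_intros rkhs_seq_pw[OF r] y xsX) auto
  have l2: "(\<lambda>n. nrm k (gs n) * sqrt (post_var k xs t y)) \<longlonglongrightarrow> rkhs_norm k X f * sqrt (post_var k xs t y)"
    by (intro tendsto_intros rkhs_norm_lim[OF pd r])
  show ?thesis
    by (rule LIMSEQ_le[OF l1 l2]) (use H0_bound(1)[OF pd rkhs_seq_X[OF r] y xsX ok] in auto)
qed



lemma det_carrier0: "(A :: real mat) \<in> carrier_mat 0 0 \<Longrightarrow> det A = 1"
  by (subst det_upper_triangular[of A 0]) (auto simp: upper_triangular_def diag_mat_def)

lemma inverse_exists:
  assumes A: "(A :: real mat) \<in> carrier_mat n n" and d: "det A \<noteq> 0"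
  shows "\<exists>B. mat_inverse A = Some B \<and> A * B = 1\<^sub>m n \<and> B * A = 1\<^sub>m n \<and> B \<in> carrier_mat n n"
proof -
  have U: "A \<in> Units (ring_mat TYPE(real) n ())" by (rule det_non_zero_imp_unit[OF A d])
  have "mat_inverse A \<noteq> None" using mat_inverse(1)[OF A, of "()"] U by auto
  then obtain B where "mat_inverse A = Some B" by auto
  then show ?thesis using mat_inverse(2)[OF A] by blast
qed

lemma kinv_ok_inv:
  assumes inv: "invertible_mat (Kmat k xs t)"
  shows "kinv_ok k xs t"
proof -
  let ?K = "Kmat k xs t"
  have K: "?K \<in> carrier_mat t t" by (simp add: Kmat_def)
  from inv obtain B where B1: "?K * B = 1\<^sub>m t" and B2: "B * ?K = 1\<^sub>m (dim_row B)"
    unfolding invertible_mat_def inverts_mat_def using K by auto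
  have "dim_col B = t" using arg_cong[OF B1, of dim_col] by simp
  moreover have "dim_row B = t" using arg_cong[OF B2, of dim_col] K by simp
  ultimately have Bc: "B \<in> carrier_mat t t" by auto
  have "det ?K * det B = 1" using det_mult[OF K Bc] B1 by simp
  then have "det ?K \<noteq> 0" by auto
  then obtain C where C: "mat_inverse ?K = Some C" "C * ?K = 1\<^sub>m t" "C \<in> carrier_mat t t"
    using inverse_exists[OF K] by blast
  have Kinv: "Kinv k xs t = C" using C(1) by (simp add: Kinv_def)
  show ?thesis unfolding kinv_ok_def
  proof (intro allI impI)
    fix i l assume i: "i < t" and l: "l < t"
    have "(C * ?K) $$ (i,l) = (if i = l then 1 else 0)" using C(2) i l by simp
    moreover have "(C * ?K) $$ (i,l) = (\<Sum>j<t. C $$ (i,j) * k (xs (Suc j)) (xs (Suc l)))"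
      using C(3) i l by (simp add: scalar_prod_def Kmat_def atLeast0LessThan)
    ultimately show "(\<Sum>j<t. Kinv k xs t $$ (i,j) * k (xs (Suc j)) (xs (Suc l))) = (if i = l then 1 else 0)"
      by (simp add: Kinv)
  qed
qed

lemma kinv_ok_0: "kinv_ok k xs 0"
  by (simp add: kinv_ok_def)

lemma quad_nonneg:
  assumes pd: "pd_kernel k X" and y: "y \<in> X" and xsX: "\<And>j. j < n \<Longrightarrow> xs (Suc j) \<in> X"
  shows "0 \<le> a * (a * k y y + (\<Sum>i<n. u i * k (xs (Suc i)) y))
     + (\<Sum>j<n. u j * (a * k y (xs (Suc j)) + (\<Sum>i<n. u i * k (xs (Suc i)) (xs (Suc j)))))"
proof -
  define L where "L = (a, y) # map (\<lambda>j. (u j, xs (Suc j))) [0..<n]"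
  have LX: "set (map snd L) \<subseteq> X" using y xsX by (auto simp: L_def)
  have ev: "pre_eval k L p = a * k y p + (\<Sum>i<n. u i * k (xs (Suc i)) p)" for p
    by (simp add: L_def pre_eval_def o_def sum_list_upt_map)
  have "ip k L L = a * pre_eval k L y + (\<Sum>j<n. u j * pre_eval k L (xs (Suc j)))"
    by (simp add: ip_eval L_def o_def sum_list_upt_map)
  then show ?thesis using psd[OF pd LX] by (simp add: ev)
qed

definition Mm :: "('a \<Rightarrow> 'a \<Rightarrow> real) \<Rightarrow> (nat \<Rightarrow> 'a) \<Rightarrow> real \<Rightarrow> nat \<Rightarrow> real mat" where
  "Mm k xs c n = 1\<^sub>m n + c \<cdot>\<^sub>m Kmat k xs n"

lemma Mm_carrier: "Mm k xs c n \<in> carrier_mat n n" by (simp add: Mm_def Kmat_def)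
lemma Mm_index: "i < n \<Longrightarrow> j < n \<Longrightarrow> Mm k xs c n $$ (i,j) = (if i = j then 1 else 0) + c * k (xs (Suc i)) (xs (Suc j))"
  by (simp add: Mm_def Kmat_def)

definition Qf :: "(nat \<Rightarrow> nat \<Rightarrow> real) \<Rightarrow> nat \<Rightarrow> (nat \<Rightarrow> real) \<Rightarrow> (nat \<Rightarrow> real) \<Rightarrow> real" where
  "Qf K n u w = (\<Sum>j<n. u j * (\<Sum>i<n. w i * K i j))"

lemma Qf_diff1: "Qf K n (\<lambda>i. u i - w i) v = Qf K n u v - Qf K n w v"
  unfolding Qf_def by (simp add: left_diff_distrib sum_subtractf)
lemma Qf_diff2: "Qf K n v (\<lambda>i. u i - w i) = Qf K n v u - Qf K n v w"
  unfolding Qf_def by (simp add: left_diff_distrib right_diff_distrib sum_subtractf)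
lemma Qf_sym:
  assumes "\<And>i j. i < n \<Longrightarrow> j < n \<Longrightarrow> K i j = K j i"
  shows "Qf K n u w = Qf K n w u"
proof -
  have "Qf K n u w = (\<Sum>j<n. \<Sum>i<n. u j * w i * K i j)"
    unfolding Qf_def by (simp add: sum_distrib_left mult.assoc)
  also have "\<dots> = (\<Sum>i<n. \<Sum>j<n. u j * w i * K i j)" by (rule sum.swap)
  also have "\<dots> = (\<Sum>i<n. \<Sum>j<n. w i * u j * K j i)"
    using assms by (intro sum.cong refl) auto
  also have "\<dots> = Qf K n w u"
    unfolding Qf_def by (simp add: sum_distrib_left mult.assoc)
  finally show ?thesis .
qed

lemma det_step:
  assumes pd: "pd_kernel k X" and xsX: "\<forall>i\<in>{1..Suc n}. xs i \<in> X" and c: "c > 0"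
    and dn: "det (Mm k xs c n) \<noteq> 0"
  shows "\<exists>s. det (Mm k xs c (Suc n)) = det (Mm k xs c n) * s \<and> 1 \<le> s
     \<and> s \<le> 1 + c * k (xs (Suc n)) (xs (Suc n))
     \<and> (kinv_ok k xs n \<longrightarrow> 1 + c * post_var k xs n (xs (Suc n)) \<le> s)"
proof -
  have sym: "\<forall>x\<in>X. \<forall>y\<in>X. k x y = k y x" using pd by (simp add: pd_kernel_def)
  define x where "x = xs (Suc n)"
  have xX: "x \<in> X" using xsX by (simp add: x_def)
  have jX: "\<And>j. j < n \<Longrightarrow> xs (Suc j) \<in> X" using xsX by auto
  define A where "A = Mm k xs c n"
  have A: "A \<in> carrier_mat n n" by (simp add: A_def Mm_carrier)
  obtain B where AB: "A * B = 1\<^sub>m n" and B: "B \<in> carrier_mat n n"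
    using inverse_exists[OF A] dn A_def by blast
  define K where "K i j = k (xs (Suc i)) (xs (Suc j))" for i j
  have Ksym: "K i j = K j i" if "i < n" "j < n" for i j
    using sym jX that by (simp add: K_def)
  define b where "b i = k (xs (Suc i)) x" for i
  define z where "z i = (\<Sum>j<n. B $$ (i,j) * (c * b j))" for i
  have Az: "z i + c * (\<Sum>l<n. K i l * z l) = c * b i" if i: "i < n" for i
  proof -
    have "(\<Sum>l<n. A $$ (i,l) * z l) = (\<Sum>j<n. (\<Sum>l<n. A $$ (i,l) * B $$ (l,j)) * (c * b j))"
      unfolding z_def sum_distrib_left sum_distrib_right mult.assoc by (rule sum.swap)
    also have "\<dots> = (\<Sum>j<n. (if i = j then 1 else 0) * (c * b j))"
    proof (rule sum.cong[OF refl])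
      fix j assume j: "j \<in> {..<n}"
      have "(A * B) $$ (i,j) = (\<Sum>l<n. A $$ (i,l) * B $$ (l,j))"
        using A B i j by (simp add: scalar_prod_def atLeast0LessThan)
      then show "(\<Sum>l<n. A $$ (i,l) * B $$ (l,j)) * (c * b j) = (if i = j then 1 else 0) * (c * b j)"
        using AB i j by simp
    qed
    also have "\<dots> = (\<Sum>j<n. if i = j then c * b j else 0)" by (intro sum.cong) auto
    also have "\<dots> = c * b i" using i by simp
    finally have 1: "(\<Sum>l<n. A $$ (i,l) * z l) = c * b i" .
    have "(\<Sum>l<n. A $$ (i,l) * z l) = (\<Sum>l<n. (if i = l then z l else 0) + c * (K i l * z l))"
      using i by (intro sum.cong) (auto simp: A_def Mm_index K_def algebra_simps)
    also have "\<dots> = z i + c * (\<Sum>l<n. K i l * z l)"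
      using i by (simp add: sum.distrib sum_distrib_left)
    finally show ?thesis using 1 by simp
  qed
  define bz where "bz = (\<Sum>j<n. k x (xs (Suc j)) * z j)"
  define s where "s = 1 + c * k x x - c * bz"
  define M where "M = Mm k xs c (Suc n)"
  have M: "M \<in> carrier_mat (Suc n) (Suc n)" by (simp add: M_def Mm_carrier)
  define E :: "real mat" where "E = mat (Suc n) (Suc n)
     (\<lambda>(i,j). if j = n then (if i = n then 1 else - z i) else (if i = j then 1 else 0))"
  have E: "E \<in> carrier_mat (Suc n) (Suc n)" by (simp add: E_def)
  have dE: "det E = 1"
    apply (subst det_upper_triangular[OF _ E])
    subgoal by (auto simp: upper_triangular_def E_def)
    by (simp add: prod_list_diag_prod E_def)
  define R :: "real mat" where "R = mat 1 n (\<lambda>(i,j). c * k x (xs (Suc j)))"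
  define S :: "real mat" where "S = mat 1 1 (\<lambda>_. s)"
  have R: "R \<in> carrier_mat 1 n" by (simp add: R_def)
  have S: "S \<in> carrier_mat 1 1" by (simp add: S_def)
  have ME: "M * E = four_block_mat A (0\<^sub>m n 1) R S"
  proof (rule eq_matI)
    show "dim_row (M * E) = dim_row (four_block_mat A (0\<^sub>m n 1) R S)" using M A S by simp
    show "dim_col (M * E) = dim_col (four_block_mat A (0\<^sub>m n 1) R S)" using E A S by simp
    fix i j assume i': "i < dim_row (four_block_mat A (0\<^sub>m n 1) R S)"
      and j': "j < dim_col (four_block_mat A (0\<^sub>m n 1) R S)"
    have i: "i < Suc n" and j: "j < Suc n" using i' j' A S by auto
    have prod: "(M * E) $$ (i,j) = (\<Sum>l<Suc n. M $$ (i,l) * E $$ (l,j))"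
      using M E i j by (simp add: scalar_prod_def atLeast0LessThan)
    have Mi: "M $$ (i,l) = (if i = l then 1 else 0) + c * k (xs (Suc i)) (xs (Suc l))" if "l < Suc n" for l
      using i that by (simp add: M_def Mm_index)
    show "(M * E) $$ (i,j) = four_block_mat A (0\<^sub>m n 1) R S $$ (i,j)"
    proof (cases "j < n")
      case True
      have "(\<Sum>l<Suc n. M $$ (i,l) * E $$ (l,j)) = (\<Sum>l<Suc n. if l = j then M $$ (i,l) else 0)"
        using True by (intro sum.cong refl) (auto simp: E_def)
      also have "\<dots> = M $$ (i,j)" using True by simp
      finally have "(M * E) $$ (i,j) = M $$ (i,j)" using prod by simp
      then show ?thesis using True i A S Mi[of j]
        by (cases "i < n") (auto simp: A_def Mm_index R_def x_def less_Suc_eq)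
    next
      case False
      then have jn: "j = n" using j by simp
      have "(\<Sum>l<Suc n. M $$ (i,l) * E $$ (l,j)) = (\<Sum>l<n. M $$ (i,l) * (- z l)) + M $$ (i,n)"
        by (simp add: jn E_def)
      also have "\<dots> = (\<Sum>l<n. - ((if i = l then z l else 0) + c * (k (xs (Suc i)) (xs (Suc l)) * z l))) + M $$ (i,n)"
        using Mi by (intro arg_cong2[where f="(+)"] sum.cong refl) (auto simp: algebra_simps)
      finally have me: "(M * E) $$ (i,j) = (\<Sum>l<n. - ((if i = l then z l else 0) + c * (k (xs (Suc i)) (xs (Suc l)) * z l))) + M $$ (i,n)"
        using prod by simp
      show ?thesis
      proof (cases "i < n")
        case True
        have "(M * E) $$ (i,j) = - (z i + c * (\<Sum>l<n. K i l * z l)) + c * b i"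
          using me True Mi[of n] by (simp add: sum_negf sum_subtractf sum.distrib sum_distrib_left K_def b_def x_def)
        also have "\<dots> = 0" using Az[OF True] by simp
        finally show ?thesis using True jn A S by simp
      next
        case False
        then have "i = n" using i by simp
        then have "(M * E) $$ (i,j) = s"
          using me Mi[of n] by (simp add: sum_negf sum_distrib_left s_def bz_def x_def algebra_simps)
        then show ?thesis using \<open>i = n\<close> jn A S by (simp add: S_def)
      qed
    qed
  qed
  have detM: "det M = det A * s"
  proof -
    have "det M = det (M * E)" using det_mult[OF M E] dE by simp
    also have "\<dots> = det A * det S" unfolding ME
      by (rule det_four_block_mat_upper_right_zero_col[OF A refl R S])
    also have "det S = s" using det_single[OF S] by (simp add: S_def)
    finally show ?thesis .
  qed
  have Qnn: "0 \<le> Qf K n u u" for u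
    using quad_nonneg[where n=n and xs=xs and a=0 and u=u, OF pd xX jX] by (simp add: Qf_def K_def)
  have bsym: "k x (xs (Suc j)) = b j" if "j < n" for j
    using sym xX jX[OF that] by (simp add: b_def)
  have E1: "c * bz = (\<Sum>i<n. z i * z i) + c * Qf K n z z"
  proof -
    have "c * bz = (\<Sum>i<n. z i * (c * b i))"
      unfolding bz_def sum_distrib_left using bsym by (intro sum.cong refl) auto
    also have "\<dots> = (\<Sum>i<n. z i * (z i + c * (\<Sum>l<n. K i l * z l)))"
      using Az by (intro sum.cong refl) auto
    also have "\<dots> = (\<Sum>i<n. z i * z i) + c * (\<Sum>i<n. z i * (\<Sum>l<n. z l * K l i))"
      using Ksym by (simp add: algebra_simps sum.distrib sum_distrib_left)
    also have "\<dots> = (\<Sum>i<n. z i * z i) + c * Qf K n z z" by (simp add: Qf_def)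
    finally show ?thesis .
  qed
  have zz: "0 \<le> (\<Sum>i<n. z i * z i)" by (intro sum_nonneg) auto
  have s1: "s \<le> 1 + c * k x x"
  proof -
    have "0 \<le> c * Qf K n z z" using Qnn[of z] c by simp
    then show ?thesis using E1 zz by (simp add: s_def)
  qed
  have q2: "0 \<le> k x x - 2 * bz + Qf K n z z"
  proof -
    have "0 \<le> 1 * (1 * k x x + (\<Sum>i<n. (- z i) * k (xs (Suc i)) x))
     + (\<Sum>j<n. (- z j) * (1 * k x (xs (Suc j)) + (\<Sum>i<n. (- z i) * k (xs (Suc i)) (xs (Suc j)))))"
      by (rule quad_nonneg[where n=n and xs=xs, OF pd xX jX])
    also have "(\<Sum>i<n. (- z i) * k (xs (Suc i)) x) = - bz"
      unfolding bz_def using bsym by (simp add: sum_negf b_def mult.commute)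
    also have "(\<Sum>j<n. (- z j) * (1 * k x (xs (Suc j)) + (\<Sum>i<n. (- z i) * k (xs (Suc i)) (xs (Suc j)))))
       = - bz + Qf K n z z"
      by (simp add: bz_def Qf_def K_def sum_negf algebra_simps sum.distrib sum_subtractf)
    finally show ?thesis by simp
  qed
  have s2: "1 \<le> s"
  proof -
    have "c * (k x x - 2 * bz + Qf K n z z) \<ge> 0" using q2 c by simp
    then show ?thesis using E1 zz c by (simp add: s_def algebra_simps)
  qed
  have s3: "1 + c * post_var k xs n x \<le> s" if ok: "kinv_ok k xs n"
  proof -
    define \<beta> where "\<beta> j = beta k xs n x j" for j
    have bK: "(\<Sum>j<n. \<beta> j * K j l) = k x (xs (Suc l))" if "l < n" for l
      using beta_K[OF ok that, of x] by (simp add: \<beta>_def K_def)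
    have Pb: "(\<Sum>j<n. \<beta> j * k x (xs (Suc j))) = Qf K n \<beta> \<beta>"
      unfolding Qf_def using bK by (intro sum.cong refl) auto
    have bz2: "bz = Qf K n z \<beta>"
      unfolding Qf_def bz_def using bK by (intro sum.cong refl) (auto simp: mult.commute)
    have pv: "post_var k xs n x = k x x - Qf K n \<beta> \<beta>"
      using Pb by (simp add: post_var_beta \<beta>_def)
    have "0 \<le> Qf K n (\<lambda>i. \<beta> i - z i) (\<lambda>i. \<beta> i - z i)" by (rule Qnn)
    also have "\<dots> = Qf K n \<beta> \<beta> - 2 * bz + Qf K n z z"
      using Qf_sym[of n K \<beta> z, OF Ksym] bz2 by (simp add: Qf_diff1 Qf_diff2)
    finally have "0 \<le> Qf K n \<beta> \<beta> - 2 * bz + Qf K n z z" .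
    then have "c * (Qf K n \<beta> \<beta> - bz) \<ge> 0" using E1 zz c
      by (smt (verit, best) mult_nonneg_nonneg right_diff_distrib)
    moreover have "c * k x x = c * Qf K n \<beta> \<beta> + c * post_var k xs n x" unfolding pv by (simp add: algebra_simps)
    ultimately show ?thesis by (simp add: s_def algebra_simps)
  qed
  show ?thesis
    using detM s1 s2 s3 by (auto simp: M_def A_def x_def)
qed



lemma D_ge1:
  assumes pd: "pd_kernel k X" and c: "c > 0"
  shows "(\<forall>i\<in>{1..n}. xs i \<in> X) \<Longrightarrow> 1 \<le> det (Mm k xs c n)"
proof (induction n)
  case 0
  then show ?case using det_carrier0[OF Mm_carrier[of k xs c 0]] by simp
next
  case (Suc n)
  have ih: "1 \<le> det (Mm k xs c n)" using Suc by auto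
  obtain s where s: "det (Mm k xs c (Suc n)) = det (Mm k xs c n) * s" "1 \<le> s"
    using det_step[OF pd Suc.prems c] ih by auto
  have "1 * 1 \<le> det (Mm k xs c n) * s" by (rule mult_mono) (use s ih in auto)
  then show ?case using s by simp
qed

lemma D_upper:
  assumes pd: "pd_kernel k X" and c: "c > 0" and kb: "\<forall>y\<in>X. k y y \<le> 1"
  shows "(\<forall>i\<in>{1..n}. xs i \<in> X) \<Longrightarrow> det (Mm k xs c n) \<le> (1 + c) ^ n"
proof (induction n)
  case 0
  then show ?case using det_carrier0[OF Mm_carrier[of k xs c 0]] by simp
next
  case (Suc n)
  have ih: "det (Mm k xs c n) \<le> (1 + c) ^ n" using Suc by auto
  have g1: "1 \<le> det (Mm k xs c n)" using D_ge1[OF pd c] Suc.prems by auto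
  obtain s where s: "det (Mm k xs c (Suc n)) = det (Mm k xs c n) * s"
     "s \<le> 1 + c * k (xs (Suc n)) (xs (Suc n))" "1 \<le> s"
    using det_step[OF pd Suc.prems c] g1 by auto
  have "k (xs (Suc n)) (xs (Suc n)) \<le> 1" using kb Suc.prems by auto
  then have "s \<le> 1 + c" using s(2) c by (smt (verit) mult_left_le)
  then have "det (Mm k xs c n) * s \<le> (1 + c) ^ n * (1 + c)"
    by (rule mult_mono[OF ih]) (use g1 c s(3) in auto)
  then show ?case using s(1) by (simp add: mult.commute)
qed

lemma post_var_nonneg:
  assumes pd: "pd_kernel k X" and y: "y \<in> X"
    and xsX: "\<And>j. j < t \<Longrightarrow> xs (Suc j) \<in> X" and ok: "kinv_ok k xs t"
  shows "0 \<le> post_var k xs t y"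
  using H0_bound(2)[OF pd _ y xsX ok, of "[]"] by simp

lemma ok_at:
  assumes "\<forall>t\<in>{1..T}. invertible_mat (Kmat k xs t)" and "n \<le> T"
  shows "kinv_ok k xs n"
  using assms kinv_ok_0[of k xs] kinv_ok_inv[of k xs n] by (cases "n = 0") auto

lemma D_lower:
  assumes pd: "pd_kernel k X" and c: "c > 0" and inv: "\<forall>t\<in>{1..T}. invertible_mat (Kmat k xs t)"
  shows "n \<le> T \<Longrightarrow> (\<forall>i\<in>{1..n}. xs i \<in> X) \<Longrightarrow>
    (\<Prod>t\<in>{1..n}. 1 + c * post_var k xs (t - 1) (xs t)) \<le> det (Mm k xs c n)"
proof (induction n)
  case 0
  then show ?case using det_carrier0[OF Mm_carrier[of k xs c 0]] by simp
next
  case (Suc n)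
  have ih: "(\<Prod>t\<in>{1..n}. 1 + c * post_var k xs (t - 1) (xs t)) \<le> det (Mm k xs c n)"
    using Suc by auto
  have g1: "1 \<le> det (Mm k xs c n)" using D_ge1[OF pd c] Suc.prems by auto
  have ok: "kinv_ok k xs n" using ok_at[OF inv] Suc.prems by simp
  obtain s where s: "det (Mm k xs c (Suc n)) = det (Mm k xs c n) * s"
     "1 + c * post_var k xs n (xs (Suc n)) \<le> s"
    using det_step[OF pd Suc.prems(2) c] g1 ok by auto
  have pv: "0 \<le> post_var k xs n (xs (Suc n))"
    by (rule post_var_nonneg[OF pd _ _ ok]) (use Suc.prems in auto)
  have pp: "0 \<le> (\<Prod>t\<in>{1..n}. 1 + c * post_var k xs (t - 1) (xs t))"
  proof (rule prod_nonneg)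
    fix t assume t: "t \<in> {1..n}"
    have "0 \<le> post_var k xs (t - 1) (xs t)"
      by (rule post_var_nonneg[OF pd _ _ ok_at[OF inv]]) (use Suc.prems t in auto)
    then show "0 \<le> 1 + c * post_var k xs (t - 1) (xs t)" using c by simp
  qed
  have "(\<Prod>t\<in>{1..Suc n}. 1 + c * post_var k xs (t - 1) (xs t))
     = (\<Prod>t\<in>{1..n}. 1 + c * post_var k xs (t - 1) (xs t)) * (1 + c * post_var k xs n (xs (Suc n)))"
    by simp
  also have "\<dots> \<le> det (Mm k xs c n) * s"
    by (rule mult_mono[OF ih s(2)]) (use g1 pv c in auto)
  finally show ?case using s(1) by simp
qed

lemma concave_ln_bound:
  fixes v c :: real
  assumes "0 \<le> v" "v \<le> 1" "c > 0"
  shows "v * ln (1 + c) \<le> ln (1 + c * v)"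
proof -
  have "(1 - v) * ln 1 + v * ln (1 + c) \<le> ln ((1 - v) *\<^sub>R 1 + v *\<^sub>R (1 + c))"
    by (rule concave_onD[OF ln_concave]) (use assms in auto)
  also have "(1 - v) *\<^sub>R 1 + v *\<^sub>R (1 + c) = 1 + c * v" by (simp add: algebra_simps)
  finally show ?thesis by simp
qed



theorem theorem1:
  fixes X :: "(real ^ 'd) set" and k :: "real ^ 'd \<Rightarrow> real ^ 'd \<Rightarrow> real"
    and f :: "real ^ 'd \<Rightarrow> real" and xs :: "nat \<Rightarrow> real ^ 'd" and xstar :: "real ^ 'd"
    and T :: nat and \<sigma> C1 :: real
  assumes "compact X"
    and "pd_kernel k X"
    and "\<forall>y\<in>X. k y y \<le> 1"
    and "in_rkhs k X f"
    and "\<forall>t\<in>{1..T}. invertible_mat (Kmat k xs t)"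
    and "\<forall>t\<in>{1..T}. xs t \<in> X \<and>
           (\<forall>y\<in>X. post_mean k f xs (t - 1) y + rkhs_norm k X f * sqrt (post_var k xs (t - 1) y)
                  \<le> post_mean k f xs (t - 1) (xs t) + rkhs_norm k X f * sqrt (post_var k xs (t - 1) (xs t)))"
    and "xstar \<in> X" and "\<forall>y\<in>X. f y \<le> f xstar"
    and "T \<ge> 1"
    and "\<sigma> > 0"
    and "C1 = 8 / ln (1 + 1 / \<sigma>\<^sup>2)"
  shows "cumulative_regret f xstar xs T \<le> rkhs_norm k X f * sqrt (real T * C1 * max_info_gain k X \<sigma> T)
       \<and> simple_regret f xstar xs T \<le> rkhs_norm k X f * sqrt (C1 * max_info_gain k X \<sigma> T / real T)"
proof -
  note pd = assms(2)
  define c where "c = 1 / \<sigma>\<^sup>2"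
  have c: "c > 0" using assms(10) by (simp add: c_def)
  define L where "L = ln (1 + c)"
  have L: "L > 0" using c by (simp add: L_def)
  have C1: "C1 = 8 / L" using assms(11) by (simp add: L_def c_def)
  define Nf where "Nf = rkhs_norm k X f"
  define \<gamma> where "\<gamma> = max_info_gain k X \<sigma> T"
  define v where "v t = post_var k xs (t - 1) (xs t)" for t
  have xsX: "\<forall>i\<in>{1..T}. xs i \<in> X" using assms(6) by blast
  have Nf0: "0 \<le> Nf"
  proof -
    obtain gs where r: "rkhs_seq k X gs f" using assms(4) by (auto simp: in_rkhs_def)
    show ?thesis unfolding Nf_def
      by (rule LIMSEQ_le_const[OF rkhs_norm_lim[OF pd r]]) (use nrm_nonneg[OF pd rkhs_seq_X[OF r]] in auto)
  qed
  have pt: "f xstar - f (xs t) \<le> 2 * Nf * sqrt (v t)" if t: "t \<in> {1..T}" for t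
  proof -
    have jX: "\<And>j. j < t - 1 \<Longrightarrow> xs (Suc j) \<in> X" using xsX t by auto
    have ok: "kinv_ok k xs (t - 1)" using ok_at[OF assms(5)] t by auto
    have xt: "xs t \<in> X" using xsX t by auto
    have b1: "\<bar>f xstar - post_mean k f xs (t-1) xstar\<bar> \<le> Nf * sqrt (post_var k xs (t-1) xstar)"
      unfolding Nf_def by (rule f_bound[OF pd assms(4) assms(7) jX ok])
    have b2: "\<bar>f (xs t) - post_mean k f xs (t-1) (xs t)\<bar> \<le> Nf * sqrt (v t)"
      unfolding Nf_def v_def by (rule f_bound[OF pd assms(4) xt jX ok])
    have u: "post_mean k f xs (t-1) xstar + Nf * sqrt (post_var k xs (t-1) xstar)
        \<le> post_mean k f xs (t-1) (xs t) + Nf * sqrt (v t)"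
      using assms(6) t assms(7) by (auto simp: Nf_def v_def)
    show ?thesis using b1 b2 u by (simp add: abs_le_iff)
  qed
  have v0: "0 \<le> v t" if t: "t \<in> {1..T}" for t
    unfolding v_def
    by (rule post_var_nonneg[OF pd _ _ ok_at[OF assms(5)]]) (use xsX t in auto)
  have v1: "v t \<le> 1" if t: "t \<in> {1..T}" for t
  proof -
    have tt: "Suc (t - 1) = t" using t by auto
    have X': "\<forall>i\<in>{1..Suc (t - 1)}. xs i \<in> X" using xsX t by auto
    have ok: "kinv_ok k xs (t - 1)" using ok_at[OF assms(5)] t by auto
    have g1: "1 \<le> det (Mm k xs c (t - 1))" by (rule D_ge1[OF pd c]) (use xsX t in auto)
    obtain s where s: "s \<le> 1 + c * k (xs (Suc (t - 1))) (xs (Suc (t - 1)))"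
      "1 + c * post_var k xs (t - 1) (xs (Suc (t - 1))) \<le> s"
      using det_step[OF pd X' c] g1 ok by auto
    have "k (xs t) (xs t) \<le> 1" using assms(3) xsX t by auto
    then have a: "c * k (xs t) (xs t) \<le> c * 1" using c by (intro mult_left_mono) auto
    have "c * v t \<le> c * k (xs t) (xs t)" using s tt by (simp add: v_def)
    then have "c * v t \<le> c * 1" using a by linarith
    then show ?thesis using c by simp
  qed
  have Dx: "det (Mm k xs c T) = det (1\<^sub>m T + (1 / \<sigma>\<^sup>2) \<cdot>\<^sub>m Kmat k xs T)"
    by (simp add: Mm_def c_def)
  have gam: "1/2 * ln (det (Mm k xs c T)) \<le> \<gamma>"
  proof -
    let ?F = "\<lambda>xs'. 1/2 * ln (det (1\<^sub>m T + (1 / \<sigma>\<^sup>2) \<cdot>\<^sub>m Kmat k xs' T))"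
    let ?S = "{xs'. \<forall>i\<in>{1..T}. xs' i \<in> X}"
    have bdd: "bdd_above (?F ` ?S)"
    proof (rule bdd_aboveI2)
      fix xs' assume "xs' \<in> ?S"
      then have X': "\<forall>i\<in>{1..T}. xs' i \<in> X" by simp
      have d1: "1 \<le> det (Mm k xs' c T)" using D_ge1[OF pd c X'] .
      have d2: "det (Mm k xs' c T) \<le> (1 + c) ^ T" using D_upper[OF pd c assms(3) X'] .
      have "ln (det (Mm k xs' c T)) \<le> ln ((1 + c) ^ T)" using d1 d2 by simp
      also have "\<dots> = T * L" using c by (simp add: L_def ln_realpow)
      finally show "?F xs' \<le> 1/2 * (T * L)" by (simp add: Mm_def c_def)
    qed
    have "?F xs \<le> (SUP xs'\<in>?S. ?F xs')" by (rule cSUP_upper[OF _ bdd]) (use xsX in simp)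
    then show ?thesis unfolding \<gamma>_def max_info_gain_def using Dx by simp
  qed
  have sum_ln: "(\<Sum>t\<in>{1..T}. ln (1 + c * v t)) \<le> 2 * \<gamma>"
  proof -
    have pos: "1 \<le> 1 + c * v t" if "t \<in> {1..T}" for t using v0[OF that] c by simp
    have "(\<Sum>t\<in>{1..T}. ln (1 + c * v t)) = ln (\<Prod>t\<in>{1..T}. 1 + c * v t)"
      by (rule ln_prod[symmetric]) (use pos in force)+
    also have "\<dots> \<le> ln (det (Mm k xs c T))"
    proof -
      have p1: "1 \<le> (\<Prod>t\<in>{1..T}. 1 + c * v t)" by (rule prod_ge_1) (use pos in auto)
      have "(\<Prod>t\<in>{1..T}. 1 + c * v t) \<le> det (Mm k xs c T)"
        using D_lower[OF pd c assms(5) _ xsX] by (simp add: v_def)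
      then show ?thesis using p1 by simp
    qed
    finally show ?thesis using gam by simp
  qed
  have sv: "(\<Sum>t\<in>{1..T}. v t) \<le> C1 * \<gamma> / 4"
  proof -
    have "(\<Sum>t\<in>{1..T}. v t * L) \<le> (\<Sum>t\<in>{1..T}. ln (1 + c * v t))"
      by (rule sum_mono) (use concave_ln_bound v0 v1 c in \<open>auto simp: L_def\<close>)
    then have "(\<Sum>t\<in>{1..T}. v t) * L \<le> 2 * \<gamma>" using sum_ln by (simp add: sum_distrib_right)
    then have "(\<Sum>t\<in>{1..T}. v t) \<le> 2 * \<gamma> / L" using L by (simp add: pos_le_divide_eq)
    then show ?thesis using C1 L by simp
  qed
  have ssq: "(\<Sum>t\<in>{1..T}. sqrt (v t)) \<le> sqrt (real T * (C1 * \<gamma> / 4))"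
  proof -
    have "(\<Sum>t\<in>{1..T}. sqrt (v t))\<^sup>2 \<le> (\<Sum>t\<in>{1..T}. (sqrt (v t))\<^sup>2) * card {1..T}"
      by (rule sum_squared_le_sum_of_squares)
    also have "(\<Sum>t\<in>{1..T}. (sqrt (v t))\<^sup>2) = (\<Sum>t\<in>{1..T}. v t)"
      using v0 by (intro sum.cong) auto
    also have "(\<Sum>t\<in>{1..T}. v t) * card {1..T} \<le> (C1 * \<gamma> / 4) * card {1..T}"
      by (rule mult_right_mono[OF sv]) simp
    finally have "(\<Sum>t\<in>{1..T}. sqrt (v t))\<^sup>2 \<le> real T * (C1 * \<gamma> / 4)"
      by (simp add: mult.commute)
    then show ?thesis by (rule real_le_rsqrt)
  qed
  have R: "cumulative_regret f xstar xs T \<le> Nf * sqrt (real T * C1 * \<gamma>)"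
  proof -
    have "cumulative_regret f xstar xs T \<le> (\<Sum>t\<in>{1..T}. 2 * Nf * sqrt (v t))"
      unfolding cumulative_regret_def by (rule sum_mono) (use pt in auto)
    also have "\<dots> = 2 * Nf * (\<Sum>t\<in>{1..T}. sqrt (v t))" by (simp add: sum_distrib_left)
    also have "\<dots> \<le> 2 * Nf * sqrt (real T * (C1 * \<gamma> / 4))"
      by (rule mult_left_mono[OF ssq]) (use Nf0 in simp)
    also have "sqrt (real T * (C1 * \<gamma> / 4)) = sqrt (real T * C1 * \<gamma>) / 2"
      by (simp add: real_sqrt_divide mult.assoc)
    finally show ?thesis by simp
  qed
  have r: "simple_regret f xstar xs T \<le> cumulative_regret f xstar xs T / real T"
  proof -
    define Mx where "Mx = Max ((\<lambda>t. f (xs t)) ` {1..T})"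
    have "f (xs t) \<le> Mx" if "t \<in> {1..T}" for t unfolding Mx_def by (rule Max_ge) (use that in auto)
    then have "(\<Sum>t\<in>{1..T}. f xstar - Mx) \<le> cumulative_regret f xstar xs T"
      unfolding cumulative_regret_def by (intro sum_mono) auto
    then have "real T * (f xstar - Mx) \<le> cumulative_regret f xstar xs T" by simp
    moreover have "real T > 0" using assms(9) by simp
    ultimately show ?thesis by (simp add: simple_regret_def Mx_def pos_le_divide_eq mult.commute)
  qed
  have sq: "sqrt (real T * C1 * \<gamma>) / real T = sqrt (C1 * \<gamma> / real T)"
  proof -
    have T0: "real T > 0" using assms(9) by simp
    have sT: "sqrt (real T) \<noteq> 0" using T0 by simp
    have "sqrt (real T * C1 * \<gamma>) / real T = (sqrt (real T) * sqrt (C1 * \<gamma>)) / (sqrt (real T) * sqrt (real T))"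
      using T0 by (simp add: real_sqrt_mult mult.assoc)
    also have "\<dots> = sqrt (C1 * \<gamma>) / sqrt (real T)"
      by (rule mult_divide_mult_cancel_left[OF sT])
    also have "\<dots> = sqrt (C1 * \<gamma> / real T)" by (simp add: real_sqrt_divide)
    finally show ?thesis by simp
  qed
  have "simple_regret f xstar xs T \<le> Nf * sqrt (real T * C1 * \<gamma>) / real T"
  proof -
    have "cumulative_regret f xstar xs T / real T \<le> Nf * sqrt (real T * C1 * \<gamma>) / real T"
      by (rule divide_right_mono[OF R]) simp
    then show ?thesis using r by linarith
  qed
  also have "\<dots> = Nf * sqrt (C1 * \<gamma> / real T)"
    by (subst times_divide_eq_right[symmetric]) (simp only: sq)
  finally show ?thesis using R by (simp add: Nf_def \<gamma>_def)
qed

end
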